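(* Let $\mathcal{G}=(V,E_L,E_R)$ be an achievement positional game. If there exists a bijection $\sigma:V\to V$ such that $\sigma(e)\in E_L$ and $\sigma^{-1}(e)\in E_L$ for all $e\in E_R$, then Left has a non-losing strategy on $\mathcal{G}$ as first player.
   Context: A hypergraph is a pair $(V,E)$ with $V$ finite and $E\subseteq 2^V\setminus\{\varnothing\}$. An achievement positional game is a triple $\mathcal{G}=(V,E_L,E_R)$ where $(V,E_L)$ and $(V,E_R)$ are hypergraphs; elements of $E_L$ are blue edges, elements of $E_R$ are red edges. Two players, Left and Right, alternately pick a previously unpicked vertex of $V$ (either player may be designated to start). A player fills an edge when they have picked all its vertices. If Left fills a blue edge before Right fills a red edge, Left wins; if Right fills a red edge before Left fills a blue edge, Right wins; if neither happens before all vertices are picked, the game is a draw. A non-losing strategy guarantees a win or a draw. For $e\subseteq V$, $\sigma(e)=\{\sigma(x):x\in e\}$. *)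

theory Defs
  imports Main
begin

text \<open>Plays are lists of picked vertices, in order.  Left moves first, so Left
picks the entries at even positions (0,2,4,...) and Right those at odd positions.\<close>

definition left_picks :: "'a list \<Rightarrow> 'a set" where
  "left_picks xs = {xs ! i | i. i < length xs \<and> even i}"

definition right_picks :: "'a list \<Rightarrow> 'a set" where
  "right_picks xs = {xs ! i | i. i < length xs \<and> odd i}"

definition hypergraph :: "'a set \<Rightarrow> 'a set set \<Rightarrow> bool" where
  "hypergraph V E \<longleftrightarrow> finite V \<and> E \<subseteq> Pow V - {{}}"

definition right_wins_play :: "'a set set \<Rightarrow> 'a set set \<Rightarrow> 'a list \<Rightarrow> bool" where
  "right_wins_play EL ER xs \<longleftrightarrow>
     (\<exists>k \<le> length xs. (\<exists>e \<in> ER. e \<subseteq> right_picks (take k xs)) \<and>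
        (\<forall>j \<le> k. \<not> (\<exists>e \<in> EL. e \<subseteq> left_picks (take j xs))))"

definition consistent_left :: "('a list \<Rightarrow> 'a) \<Rightarrow> 'a list \<Rightarrow> bool" where
  "consistent_left s xs \<longleftrightarrow> (\<forall>i < length xs. even i \<longrightarrow> xs ! i = s (take i xs))"

definition nonlosing_left_first ::
  "'a set \<Rightarrow> 'a set set \<Rightarrow> 'a set set \<Rightarrow> ('a list \<Rightarrow> 'a) \<Rightarrow> bool" where
  "nonlosing_left_first V EL ER s \<longleftrightarrow>
     (\<forall>h. distinct h \<and> set h \<subseteq> V \<and> consistent_left s h \<and> even (length h)
          \<and> length h < card V \<longrightarrow> s h \<in> V - set h) \<and>
     (\<forall>xs. distinct xs \<and> set xs = V \<and> consistent_left s xs \<longrightarrow>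
          \<not> right_wins_play EL ER xs)"

end

theory Submission imports Defs begin

inductive RF :: "'a set \<Rightarrow> 'a set set \<Rightarrow> 'a set set \<Rightarrow> 'a set \<Rightarrow> 'a set \<Rightarrow> bool \<Rightarrow> bool"
  for V EL ER where
  base: "\<not>(\<exists>f\<in>EL. f \<subseteq> L) \<Longrightarrow> \<exists>e\<in>ER. e \<subseteq> R \<Longrightarrow> RF V EL ER L R t"
| left: "\<not>(\<exists>f\<in>EL. f \<subseteq> L) \<Longrightarrow> V - (L \<union> R) \<noteq> {} \<Longrightarrow>
     (\<forall>x\<in>V-(L\<union>R). RF V EL ER (insert x L) R False) \<Longrightarrow> RF V EL ER L R True"
| right: "\<not>(\<exists>f\<in>EL. f \<subseteq> L) \<Longrightarrow> x \<in> V-(L\<union>R) \<Longrightarrow> RF V EL ER L (insert x R) True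
     \<Longrightarrow> RF V EL ER L R False"

lemma RF_noblue: "RF V EL ER L R t \<Longrightarrow> \<not>(\<exists>f\<in>EL. f \<subseteq> L)"
  by (induction rule: RF.induct) auto

lemma steal:
  assumes bij: "bij_betw \<sigma> V V" and H: "\<forall>e\<in>ER. \<sigma>`e \<in> EL \<and> inv_into V \<sigma> ` e \<in> EL"
  shows "RF V EL ER L1 R1 t \<Longrightarrow> RF V EL ER L2 R2 (\<not>t) \<Longrightarrow> L1 \<subseteq> V \<Longrightarrow> R1 \<subseteq> V
     \<Longrightarrow> \<sigma>`L1 = R2 \<Longrightarrow> \<sigma>`R1 \<subseteq> L2 \<Longrightarrow> False"
proof (induction L1 R1 t arbitrary: L2 R2 rule: RF.induct)
  case (base L R t)
  obtain e where e: "e\<in>ER" "e \<subseteq> R" using base by blast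
  have "\<sigma>`e \<subseteq> L2" using e base.prems by blast
  moreover have "\<sigma>`e\<in>EL" using H e by blast
  moreover have "\<not>(\<exists>f\<in>EL. f \<subseteq> L2)" using base.prems(1) by (rule RF_noblue)
  ultimately show ?case by blast
next
  case (left L R)
  have Q: "RF V EL ER L2 R2 False" using left.prems(1) by simp
  from Q show ?case
  proof (cases rule: RF.cases)
    case base
    then obtain e where e: "e\<in>ER" "e\<subseteq>R2" by blast
    have "inv_into V \<sigma> ` e \<subseteq> L"
    proof
      fix y assume "y \<in> inv_into V \<sigma> ` e"
      then obtain x where x: "x \<in> e" "y = inv_into V \<sigma> x" by blast
      then obtain u where u: "u \<in> L" "x = \<sigma> u" using e left.prems(4) by blast
      have "u \<in> V" using u left.prems(2) by blast
      then have "y = u" using x u bij by (simp add: bij_betw_def inv_into_f_f)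
      then show "y \<in> L" using u by simp
    qed
    moreover have "inv_into V \<sigma> ` e \<in> EL" using H e by blast
    ultimately show False using left.hyps(1) by blast
  next
    case (right x)
    define u where "u = inv_into V \<sigma> x"
    have xV: "x \<in> V" using right by blast
    have uV: "u \<in> V" and su: "\<sigma> u = x" using xV bij unfolding u_def bij_betw_def
      by (auto intro: inv_into_into f_inv_into_f)
    have "u \<notin> L" using su right left.prems(4) by blast
    moreover have "u \<notin> R" using su right left.prems(5) by blast
    ultimately have uf: "u \<in> V - (L \<union> R)" using uV by blast
    have "(\<forall>L2a R2a. RF V EL ER L2a R2a (\<not> False) \<longrightarrow> insert u L \<subseteq> V \<longrightarrow> R \<subseteq> V \<longrightarrow>
         \<sigma> ` insert u L = R2a \<longrightarrow> \<sigma> ` R \<subseteq> L2a \<longrightarrow> False)"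
      using left.IH uf by blast
    then show False using right left.prems uV su by auto
  next
    case left then show False by simp
  qed
next
  case (right L x R)
  have Q: "RF V EL ER L2 R2 True" using right.prems(1) by simp
  from Q show ?case
  proof (cases rule: RF.cases)
    case base
    then obtain e where e: "e\<in>ER" "e\<subseteq>R2" by blast
    have "inv_into V \<sigma> ` e \<subseteq> L"
    proof
      fix y assume "y \<in> inv_into V \<sigma> ` e"
      then obtain x where x: "x \<in> e" "y = inv_into V \<sigma> x" by blast
      then obtain u where u: "u \<in> L" "x = \<sigma> u" using e right.prems(4) by blast
      have "u \<in> V" using u right.prems(2) by blast
      then have "y = u" using x u bij by (simp add: bij_betw_def inv_into_f_f)
      then show "y \<in> L" using u by simp
    qed
    moreover have "inv_into V \<sigma> ` e \<in> EL" using H e by blast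
    ultimately show False using right.hyps(1) by blast
  next
    case left2: left
    have xV: "x \<in> V" using right.hyps by blast
    have sxV: "\<sigma> x \<in> V" using xV bij by (auto simp: bij_betw_def)
    have "\<sigma> x \<notin> R2"
    proof
      assume "\<sigma> x \<in> R2"
      then obtain w where "w \<in> L" "\<sigma> w = \<sigma> x" using right.prems(4) by (metis imageE)
      moreover have "w \<in> V" using \<open>w \<in> L\<close> right.prems(2) by blast
      ultimately have "w = x" using xV bij by (auto simp: bij_betw_def inj_on_def)
      then show False using \<open>w \<in> L\<close> right.hyps(2) by blast
    qed
    obtain m where m: "m \<in> V - (L2 \<union> R2)" "\<sigma> x \<in> insert m L2"
    proof (cases "\<sigma> x \<in> L2")
      case True
      then show ?thesis using left2 that by blast
    next
      case False
      then show ?thesis using that sxV \<open>\<sigma> x \<notin> R2\<close> by blast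
    qed
    have Qm: "RF V EL ER (insert m L2) R2 False" using left2 m by blast
    show False
      using right.IH[of "insert m L2" R2] Qm right.prems right.hyps(2) m xV by auto
  next
    case right then show False by simp
  qed
qed


lemma picks_gen: "{(h@[x]) ! i | i. i < length (h@[x]) \<and> P i} =
   {h ! i | i. i < length h \<and> P i} \<union> (if P (length h) then {x} else {})"
proof (rule set_eqI, rule iffI)
  fix y assume "y \<in> {(h@[x]) ! i | i. i < length (h@[x]) \<and> P i}"
  then obtain i where i: "y = (h@[x]) ! i" "i < Suc (length h)" "P i" by auto
  show "y \<in> {h ! i | i. i < length h \<and> P i} \<union> (if P (length h) then {x} else {})"
  proof (cases "i < length h")
    case True then show ?thesis using i by (auto simp: nth_append)
  next
    case False then have "i = length h" using i by simp
    then show ?thesis using i by simp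
  qed
next
  fix y assume y: "y \<in> {h ! i | i. i < length h \<and> P i} \<union> (if P (length h) then {x} else {})"
  show "y \<in> {(h@[x]) ! i | i. i < length (h@[x]) \<and> P i}"
  proof (cases "y \<in> {h ! i | i. i < length h \<and> P i}")
    case True
    then obtain i where "y = h ! i" "i < length h" "P i" by blast
    then have "y = (h@[x]) ! i" "i < length (h@[x])" by (simp_all add: nth_append)
    then show ?thesis using \<open>P i\<close> by blast
  next
    case False
    have "P (length h) \<and> y = x" using y False by (cases "P (length h)") auto
    then show ?thesis by (intro CollectI exI[of _ "length h"]) auto
  qed
qed

lemma picks_snoc:
  "left_picks (h@[x]) = (if even (length h) then insert x (left_picks h) else left_picks h)"
  "right_picks (h@[x]) = (if odd (length h) then insert x (right_picks h) else right_picks h)"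
  unfolding left_picks_def right_picks_def
  using picks_gen[of h x even] picks_gen[of h x odd] by simp_all

lemma picks_union: "left_picks h \<union> right_picks h = set h"
  unfolding left_picks_def right_picks_def set_conv_nth by blast

lemma picks_nil: "left_picks [] = {}" "right_picks [] = {}"
  unfolding left_picks_def right_picks_def by simp_all

lemma consistent_take: "consistent_left s xs \<Longrightarrow> consistent_left s (take k xs)"
  unfolding consistent_left_def by (simp add: take_take min_def)

lemma consistent_butlast: "consistent_left s (h@[x]) \<Longrightarrow> consistent_left s h \<and> (even (length h) \<longrightarrow> x = s h)"
proof -
  assume c: "consistent_left s (h@[x])"
  have "consistent_left s h"
    unfolding consistent_left_def
  proof (intro allI impI)
    fix i assume "i < length h" "even i"
    then have "(h@[x]) ! i = s (take i (h@[x]))" using c unfolding consistent_left_def by simp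
    then show "h ! i = s (take i h)" using \<open>i < length h\<close> by (simp add: nth_append)
  qed
  moreover have "even (length h) \<longrightarrow> x = s h"
    using c unfolding consistent_left_def
    by (metis lessI length_append_singleton nth_append_length take_all_iff le_refl
          butlast_snoc butlast_take diff_Suc_1)
  ultimately show ?thesis by blast
qed

theorem lemma5:
  fixes V :: "'a set" and EL ER :: "'a set set" and \<sigma> :: "'a \<Rightarrow> 'a"
  assumes "hypergraph V EL" and "hypergraph V ER"
    and "bij_betw \<sigma> V V"
    and "\<forall>e \<in> ER. \<sigma> ` e \<in> EL \<and> inv_into V \<sigma> ` e \<in> EL"
  shows "\<exists>s. nonlosing_left_first V EL ER s"
proof -
  have finV: "finite V" using assms(1) by (simp add: hypergraph_def)
  have nonempty: "\<forall>e\<in>ER. e \<noteq> {}" using assms(2) by (auto simp: hypergraph_def)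
  have init: "\<not> RF V EL ER {} {} True"
  proof
    assume "RF V EL ER {} {} True"
    then show False
    proof (cases rule: RF.cases)
      case base then show False using nonempty by blast
    next
      case left
      then obtain x0 where "x0 \<in> V" by blast
      then have "RF V EL ER {x0} {} False" using left by auto
      then show False
        using steal[OF assms(3) assms(4), of "{}" "{}" True "{x0}" "{}"] \<open>RF V EL ER {} {} True\<close>
        by auto
    next
      case right then show False by simp
    qed
  qed
  define s where "s h = (SOME x. x \<in> V - set h \<and> \<not> RF V EL ER (insert x (left_picks h)) (right_picks h) False)" for h
  have step_ex: "\<exists>x. x \<in> V - set h \<and> \<not> RF V EL ER (insert x (left_picks h)) (right_picks h) False"
    if A: "\<not> RF V EL ER (left_picks h) (right_picks h) True" "V - set h \<noteq> {}" for h
  proof (cases "\<exists>f\<in>EL. f \<subseteq> left_picks h")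
    case True
    obtain x where "x \<in> V - set h" using A(2) by blast
    moreover have "\<not> RF V EL ER (insert x (left_picks h)) (right_picks h) False"
      using True RF_noblue by blast
    ultimately show ?thesis by blast
  next
    case False
    show ?thesis
    proof (rule ccontr)
      assume c: "\<not> ?thesis"
      have fr: "V - (left_picks h \<union> right_picks h) = V - set h" by (simp add: picks_union)
      have "\<forall>x\<in>V - (left_picks h \<union> right_picks h). RF V EL ER (insert x (left_picks h)) (right_picks h) False"
        using c unfolding fr by blast
      then have "RF V EL ER (left_picks h) (right_picks h) True"
        using False A(2) fr by (intro left) auto
      then show False using A(1) by blast
    qed
  qed
  have inv: "distinct h \<Longrightarrow> set h \<subseteq> V \<Longrightarrow> consistent_left s h \<Longrightarrow>
      \<not> RF V EL ER (left_picks h) (right_picks h) (even (length h))" for h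
  proof (induction h rule: rev_induct)
    case Nil then show ?case using init by (simp add: picks_nil)
  next
    case (snoc x h)
    have IH: "\<not> RF V EL ER (left_picks h) (right_picks h) (even (length h))"
    proof -
      have "consistent_left s h" using consistent_butlast[OF snoc.prems(3)] by blast
      moreover have "distinct h" "set h \<subseteq> V" using snoc.prems by simp_all
      ultimately show ?thesis using snoc.IH by blast
    qed
    have xf: "x \<in> V - set h" using snoc.prems by simp
    show ?case
    proof (cases "even (length h)")
      case True
      then have xs: "x = s h" using consistent_butlast[OF snoc.prems(3)] by blast
      have "\<exists>x. x \<in> V - set h \<and> \<not> RF V EL ER (insert x (left_picks h)) (right_picks h) False"
        using step_ex[of h] IH True xf by (metis empty_iff)
      then have "\<not> RF V EL ER (insert x (left_picks h)) (right_picks h) False"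
        unfolding xs s_def by (rule someI2_ex) blast
      then show ?thesis using True by (simp add: picks_snoc)
    next
      case False
      show ?thesis
      proof (cases "\<exists>f\<in>EL. f \<subseteq> left_picks h")
        case True
        have lp: "left_picks (h@[x]) = left_picks h" using False by (simp add: picks_snoc)
        show ?thesis using RF_noblue True unfolding lp by blast
      next
        case nb: False
        have xf': "x \<in> V - (left_picks h \<union> right_picks h)" using xf by (simp add: picks_union)
        have "\<not> RF V EL ER (left_picks h) (insert x (right_picks h)) True"
        proof
          assume "RF V EL ER (left_picks h) (insert x (right_picks h)) True"
          then have "RF V EL ER (left_picks h) (right_picks h) False" by (rule right[OF nb xf'])
          then show False using IH False by simp
        qed
        then show ?thesis using False by (simp add: picks_snoc)
      qed
    qed
  qed
  have "nonlosing_left_first V EL ER s"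
    unfolding nonlosing_left_first_def
  proof (intro conjI allI impI)
    fix h assume h: "distinct h \<and> set h \<subseteq> V \<and> consistent_left s h \<and> even (length h) \<and> length h < card V"
    have "card (set h) = length h" using h by (simp add: distinct_card)
    have ne: "V - set h \<noteq> {}"
    proof
      assume "V - set h = {}"
      then have "V \<subseteq> set h" by blast
      then have "card V \<le> card (set h)" by (rule card_mono[OF finite_set])
      then show False using h \<open>card (set h) = length h\<close> by simp
    qed
    have nr: "\<not> RF V EL ER (left_picks h) (right_picks h) (even (length h))"
      using h by (intro inv) simp_all
    then have nr': "\<not> RF V EL ER (left_picks h) (right_picks h) True"
      using h by simp
    have "\<exists>x. x \<in> V - set h \<and> \<not> RF V EL ER (insert x (left_picks h)) (right_picks h) False"
      by (rule step_ex[OF nr' ne])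
    then show "s h \<in> V - set h" unfolding s_def by (rule someI2_ex) blast
  next
    fix xs assume xs: "distinct xs \<and> set xs = V \<and> consistent_left s xs"
    show "\<not> right_wins_play EL ER xs"
    proof
      assume "right_wins_play EL ER xs"
      then obtain k where k0: "k \<le> length xs" "\<exists>e\<in>ER. e \<subseteq> right_picks (take k xs)"
        "\<forall>j \<le> k. \<not> (\<exists>e\<in>EL. e \<subseteq> left_picks (take j xs))"
        unfolding right_wins_play_def by blast
      have k: "k \<le> length xs" "\<exists>e\<in>ER. e \<subseteq> right_picks (take k xs)"
        "\<not> (\<exists>e\<in>EL. e \<subseteq> left_picks (take k xs))" using k0 by simp_all
      have "RF V EL ER (left_picks (take k xs)) (right_picks (take k xs)) (even (length (take k xs)))"
        using k(2,3) by (rule base[rotated])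
      moreover have d: "distinct (take k xs)" "set (take k xs) \<subseteq> V" "consistent_left s (take k xs)"
        using xs consistent_take[of s xs k] set_take_subset[of k xs] by simp_all
      ultimately show False using inv[OF d] by blast
    qed
  qed
  then show ?thesis by blast
qed


end
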